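(* Let $k,r\ge 0$ and let $T$ be a tree with $n\le 2^r+2$ vertices and $l<k$ leaves, precolored so that its colored vertices are exactly its leaves, where this coloring of the leaves does not extend to a proper 3-coloring of $T$. Then Spoiler has a winning strategy in $\mathcal{G}^k_r(T)$.
   Context: Colors are red, blue, green; a coloring is proper if adjacent vertices get different colors. A $k$-precolored graph is a finite graph together with an assignment of colors to at most $k$ of its vertices. The game $\mathcal{G}^k_r(H)$ on a $k$-precolored graph $H$ starts from the given precoloring and lasts $r$ rounds; in each round Spoiler may erase the colors of some currently colored vertices and then selects a vertex, which Duplicator colors with one of the three colors; after each round at most $k$ vertices may be colored. Duplicator wins if the initial partial coloring and the partial coloring after each round are proper; otherwise Spoiler wins. *)

theory Defs
  imports Main
begin

datatype color = Red | Blue | Green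

definition simple_graph :: "'a set \<Rightarrow> ('a \<Rightarrow> 'a \<Rightarrow> bool) \<Rightarrow> bool" where
  "simple_graph V E \<longleftrightarrow> finite V \<and> (\<forall>u v. E u v \<longrightarrow> E v u) \<and> (\<forall>v. \<not> E v v)
     \<and> (\<forall>u v. E u v \<longrightarrow> u \<in> V \<and> v \<in> V)"

definition connected_graph :: "'a set \<Rightarrow> ('a \<Rightarrow> 'a \<Rightarrow> bool) \<Rightarrow> bool" where
  "connected_graph V E \<longleftrightarrow> V \<noteq> {} \<and> (\<forall>u\<in>V. \<forall>v\<in>V. E\<^sup>*\<^sup>* u v)"

definition is_cycle :: "('a \<Rightarrow> 'a \<Rightarrow> bool) \<Rightarrow> 'a list \<Rightarrow> bool" where
  "is_cycle E cs \<longleftrightarrow> length cs \<ge> 3 \<and> distinct cs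
     \<and> (\<forall>i. Suc i < length cs \<longrightarrow> E (cs ! i) (cs ! Suc i))
     \<and> E (last cs) (hd cs)"

definition is_tree :: "'a set \<Rightarrow> ('a \<Rightarrow> 'a \<Rightarrow> bool) \<Rightarrow> bool" where
  "is_tree V E \<longleftrightarrow> simple_graph V E \<and> connected_graph V E \<and> (\<nexists>cs. is_cycle E cs)"

definition leaves :: "'a set \<Rightarrow> ('a \<Rightarrow> 'a \<Rightarrow> bool) \<Rightarrow> 'a set" where
  "leaves V E = {v \<in> V. card {u \<in> V. E v u} = 1}"

definition proper_partial :: "('a \<Rightarrow> 'a \<Rightarrow> bool) \<Rightarrow> ('a \<Rightarrow> color option) \<Rightarrow> bool" where
  "proper_partial E p \<longleftrightarrow> (\<forall>u v. E u v \<longrightarrow> p u \<noteq> None \<longrightarrow> p v \<noteq> None \<longrightarrow> p u \<noteq> p v)"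

definition extends_to_proper :: "'a set \<Rightarrow> ('a \<Rightarrow> 'a \<Rightarrow> bool) \<Rightarrow> ('a \<Rightarrow> color option) \<Rightarrow> bool" where
  "extends_to_proper V E p \<longleftrightarrow> (\<exists>g :: 'a \<Rightarrow> color.
      (\<forall>u\<in>V. \<forall>v\<in>V. E u v \<longrightarrow> g u \<noteq> g v) \<and> (\<forall>v \<in> dom p. p v = Some (g v)))"

text \<open>spoiler_wins V E k r p: Spoiler has a winning strategy in the r-round game
starting from the current partial coloring p.  In a round Spoiler erases some colors
(passing to a restriction q of p), selects an uncolored vertex v such that after the
round at most k vertices are colored, and Duplicator colors v with some color.\<close>
fun spoiler_wins :: "'a set \<Rightarrow> ('a \<Rightarrow> 'a \<Rightarrow> bool) \<Rightarrow> nat \<Rightarrow> nat \<Rightarrow> ('a \<Rightarrow> color option) \<Rightarrow> bool" where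
  "spoiler_wins V E k 0 p \<longleftrightarrow> \<not> proper_partial E p"
| "spoiler_wins V E k (Suc r) p \<longleftrightarrow> \<not> proper_partial E p \<or>
     (\<exists>q v. q \<subseteq>\<^sub>m p \<and> v \<in> V \<and> v \<notin> dom q \<and> card (dom q) + 1 \<le> k \<and>
        (\<forall>c. spoiler_wins V E k r (q(v \<mapsto> c))))"

end

theory Submission imports Defs begin

locale FG = fixes V :: "'a set" and E :: "'a \<Rightarrow> 'a \<Rightarrow> bool"
  assumes finV: "finite V" and symE: "E u w \<Longrightarrow> E w u" and irrE: "\<not> E u u"
    and acyc: "\<not> is_cycle E cs"
begin

definition R :: "'a set \<Rightarrow> 'a \<Rightarrow> 'a \<Rightarrow> bool" where
  "R A a b \<longleftrightarrow> E a b \<and> a \<in> A \<and> b \<in> A"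

definition comp :: "'a set \<Rightarrow> 'a \<Rightarrow> 'a set" where
  "comp A x = {y. (R A)\<^sup>*\<^sup>* x y}"

lemma R_sym: "(R A)\<^sup>*\<^sup>* a b \<Longrightarrow> (R A)\<^sup>*\<^sup>* b a"
proof (induction rule: rtranclp.induct)
  case (rtrancl_refl a) then show ?case by simp
next
  case (rtrancl_into_rtrancl a b c)
  have "R A c b" using rtrancl_into_rtrancl.hyps(2) symE unfolding R_def by blast
  then show ?case using rtrancl_into_rtrancl.IH by (meson converse_rtranclp_into_rtranclp)
qed

lemma R_in: "(R A)\<^sup>*\<^sup>* a b \<Longrightarrow> a \<in> A \<Longrightarrow> b \<in> A"
  by (induction rule: rtranclp.induct) (auto simp: R_def)

lemma R_mono: "A \<subseteq> B \<Longrightarrow> (R A)\<^sup>*\<^sup>* a b \<Longrightarrow> (R B)\<^sup>*\<^sup>* a b"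
proof -
  assume "A \<subseteq> B" "(R A)\<^sup>*\<^sup>* a b"
  moreover have "R A \<le> R B" using \<open>A \<subseteq> B\<close> unfolding R_def by auto
  ultimately show ?thesis using rtranclp_mono by blast
qed

lemma crossing: "r\<^sup>*\<^sup>* a b \<Longrightarrow> \<not> P a \<Longrightarrow> P b \<Longrightarrow> \<exists>y z. r\<^sup>*\<^sup>* a y \<and> r y z \<and> \<not> P y \<and> P z"
proof (induction rule: rtranclp.induct)
  case (rtrancl_refl a) then show ?case by simp
next
  case (rtrancl_into_rtrancl a b c)
  show ?case
  proof (cases "P b")
    case True then show ?thesis using rtrancl_into_rtrancl by blast
  next
    case False then show ?thesis using rtrancl_into_rtrancl by blast
  qed
qed

lemma closure: "r\<^sup>*\<^sup>* a b \<Longrightarrow> a \<in> D \<Longrightarrow> (\<And>y z. y \<in> D \<Longrightarrow> r y z \<Longrightarrow> z \<in> D) \<Longrightarrow> b \<in> D"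
  by (induction rule: rtranclp.induct) auto

lemma R_restrict: "(R A)\<^sup>*\<^sup>* a b \<Longrightarrow> (\<forall>y. (R A)\<^sup>*\<^sup>* a y \<longrightarrow> y \<in> B) \<Longrightarrow> (R (A \<inter> B))\<^sup>*\<^sup>* a b"
proof (induction rule: rtranclp.induct)
  case (rtrancl_refl a) then show ?case by simp
next
  case (rtrancl_into_rtrancl a b c)
  have "b \<in> B" "c \<in> B" using rtrancl_into_rtrancl by (auto intro: rtranclp.rtrancl_into_rtrancl)
  then have "R (A \<inter> B) b c" using rtrancl_into_rtrancl.hyps(2) unfolding R_def by auto
  then show ?case using rtrancl_into_rtrancl by (meson rtranclp.rtrancl_into_rtrancl)
qed

lemma comp_in: "x \<in> A \<Longrightarrow> comp A x \<subseteq> A"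
  unfolding comp_def using R_in by blast

lemma comp_self: "x \<in> comp A x"
  unfolding comp_def by simp

lemma comp_eq: "y \<in> comp A x \<Longrightarrow> comp A y = comp A x"
  unfolding comp_def using R_sym by (auto intro: rtranclp_trans)

lemma comp_close: "y \<in> comp A x \<Longrightarrow> y \<in> A \<Longrightarrow> z \<in> A \<Longrightarrow> E y z \<Longrightarrow> z \<in> comp A x"
  unfolding comp_def by (auto simp: R_def intro: rtranclp.rtrancl_into_rtrancl)

definition chainE :: "'a list \<Rightarrow> bool" where
  "chainE xs \<longleftrightarrow> (\<forall>i. Suc i < length xs \<longrightarrow> E (xs ! i) (xs ! Suc i))"

lemma simple_path:
  assumes "(R A)\<^sup>*\<^sup>* a b" "a \<in> A"
  shows "\<exists>xs. xs \<noteq> [] \<and> hd xs = a \<and> last xs = b \<and> distinct xs \<and> set xs \<subseteq> A \<and> chainE xs"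
  using assms
proof (induction rule: rtranclp.induct)
  case (rtrancl_refl a) then show ?case by (intro exI[of _ "[a]"]) (auto simp: chainE_def)
next
  case (rtrancl_into_rtrancl a b c)
  then obtain xs where xs: "xs \<noteq> []" "hd xs = a" "last xs = b" "distinct xs" "set xs \<subseteq> A" "chainE xs"
    by blast
  have c: "c \<in> A" "E b c" using rtrancl_into_rtrancl.hyps(2) unfolding R_def by auto
  show ?case
  proof (cases "c \<in> set xs")
    case True
    obtain i where i: "i < length xs" "xs ! i = c" using True by (metis in_set_conv_nth)
    define ys where "ys = take (Suc i) xs"
    have "ys \<noteq> []" using xs(1) unfolding ys_def by simp
    moreover have "hd ys = a" using xs(1,2) unfolding ys_def by (simp add: hd_take)
    moreover have "last ys = c" using i unfolding ys_def by (subst last_conv_nth) (auto simp: min_def intro: arg_cong[where f="(!) xs"])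
    moreover have "distinct ys" using xs(4) unfolding ys_def by simp
    moreover have "set ys \<subseteq> A" using xs(5) unfolding ys_def by (meson order_trans set_take_subset)
    moreover have "chainE ys" using xs(6) unfolding ys_def chainE_def by auto
    ultimately show ?thesis by blast
  next
    case False
    define ys where "ys = xs @ [c]"
    have "ys \<noteq> []" unfolding ys_def by simp
    moreover have "hd ys = a" using xs(1,2) unfolding ys_def by simp
    moreover have "last ys = c" unfolding ys_def by simp
    moreover have "distinct ys" using xs(4) False unfolding ys_def by simp
    moreover have "set ys \<subseteq> A" using xs(5) c unfolding ys_def by simp
    moreover have "chainE ys" unfolding chainE_def
    proof (intro allI impI)
      fix j assume j: "Suc j < length ys"
      show "E (ys ! j) (ys ! Suc j)"
      proof (cases "Suc j < length xs")
        case True then show ?thesis using xs(6) unfolding ys_def chainE_def by (simp add: nth_append)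
      next
        case False
        then have "Suc j = length xs" using j unfolding ys_def by simp
        then have "ys ! j = last xs" "ys ! Suc j = c" using xs(1) unfolding ys_def
          by (auto simp: nth_append last_conv_nth intro: arg_cong[where f="(!) xs"])
        then show ?thesis using xs(3) c by simp
      qed
    qed
    ultimately show ?thesis by blast
  qed
qed

lemma no_two_nbrs:
  assumes "v \<notin> A" "E v a" "E v b" "a \<noteq> b" "(R A)\<^sup>*\<^sup>* a b" "a \<in> A"
  shows False
proof -
  obtain xs where xs: "xs \<noteq> []" "hd xs = a" "last xs = b" "distinct xs" "set xs \<subseteq> A" "chainE xs"
    using simple_path assms(5,6) by blast
  have "length xs \<noteq> 1"
  proof
    assume "length xs = 1"
    then obtain z where "xs = [z]" by (cases xs) auto
    then show False using xs assms(4) by simp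
  qed
  then have len: "length xs \<ge> 2" using xs(1) by (cases xs) (auto simp: Suc_le_eq)
  have "is_cycle E (v # xs)" unfolding is_cycle_def
  proof (intro conjI allI impI)
    show "3 \<le> length (v # xs)" using len by simp
    show "distinct (v # xs)" using xs assms(1) by auto
    show "E (last (v # xs)) (hd (v # xs))" using xs(1,3) assms(3) symE by simp
  next
    fix i assume i: "Suc i < length (v # xs)"
    show "E ((v # xs) ! i) ((v # xs) ! Suc i)"
    proof (cases i)
      case 0 then show ?thesis using xs(1,2) assms(2) by (simp add: hd_conv_nth)
    next
      case (Suc j) then show ?thesis using xs(6) i unfolding chainE_def by simp
    qed
  qed
  then show False using acyc by blast
qed


definition conn :: "'a set \<Rightarrow> bool" where
  "conn S \<longleftrightarrow> (\<forall>a\<in>S. \<forall>b\<in>S. (R S)\<^sup>*\<^sup>* a b)"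

definition ext :: "'a set \<Rightarrow> ('a \<Rightarrow> color option) \<Rightarrow> bool" where
  "ext S p \<longleftrightarrow> (\<exists>g. (\<forall>u\<in>S. \<forall>w\<in>S. E u w \<longrightarrow> g u \<noteq> g w) \<and> (\<forall>x\<in>dom p. p x = Some (g x)))"

lemma chainE_snoc: "chainE xs \<Longrightarrow> xs \<noteq> [] \<Longrightarrow> E (last xs) y \<Longrightarrow> chainE (xs @ [y])"
  unfolding chainE_def
proof (intro allI impI)
  fix j assume c: "\<forall>i. Suc i < length xs \<longrightarrow> E (xs ! i) (xs ! Suc i)" and ne: "xs \<noteq> []"
    and l: "E (last xs) y" and j: "Suc j < length (xs @ [y])"
  show "E ((xs @ [y]) ! j) ((xs @ [y]) ! Suc j)"
  proof (cases "Suc j < length xs")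
    case True then show ?thesis using c by (simp add: nth_append)
  next
    case False
    then have "Suc j = length xs" using j by simp
    then have "(xs @ [y]) ! j = last xs" "(xs @ [y]) ! Suc j = y" using ne
      by (auto simp: nth_append last_conv_nth intro: arg_cong[where f="(!) xs"])
    then show ?thesis using l by simp
  qed
qed

lemma nbr:
  assumes "conn S" "v \<in> S" "x \<in> S - {v}"
  shows "\<exists>z\<in>comp (S-{v}) x. E v z"
proof -
  let ?C = "comp (S-{v}) x"
  have Csub: "?C \<subseteq> S - {v}" using comp_in[of x "S - {v}"] assms(3) by simp
  have "(R S)\<^sup>*\<^sup>* v x" using assms unfolding conn_def by blast
  then obtain y z where yz: "(R S)\<^sup>*\<^sup>* v y" "R S y z" "y \<notin> ?C" "z \<in> ?C"
    using crossing[of "R S" v x "\<lambda>t. t \<in> ?C"] Csub comp_self by blast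
  show ?thesis
  proof (cases "y = v")
    case True then show ?thesis using yz unfolding R_def by blast
  next
    case False
    then have "y \<in> S - {v}" using yz(2) unfolding R_def by auto
    moreover have "E z y" using yz(2) symE unfolding R_def by auto
    ultimately have "y \<in> ?C" using comp_close[OF yz(4)] Csub yz(4) by blast
    then show ?thesis using yz(3) by blast
  qed
qed

lemma colored_in_branch:
  assumes "v \<in> S" "w \<in> S" "w \<noteq> v" "E v w" "S \<subseteq> V"
    and unc: "\<forall>x\<in>S - D. \<exists>y z. y \<noteq> z \<and> R S x y \<and> R S x z"
  shows "comp (S - {v}) w \<inter> D \<noteq> {}"
proof
  assume H: "comp (S - {v}) w \<inter> D = {}"
  define C where "C = comp (S - {v}) w"
  have Csub: "C \<subseteq> S - {v}" unfolding C_def using comp_in[of w "S - {v}"] assms(2,3) by simp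
  have "C \<subseteq> V" using Csub assms(5) by blast
  then have finC: "finite C" using finV finite_subset by auto
  define P where "P xs \<longleftrightarrow> xs \<noteq> [] \<and> hd xs = w \<and> distinct xs \<and> set xs \<subseteq> C \<and> chainE xs" for xs
  have P0: "P [w]" unfolding P_def C_def chainE_def using comp_self by auto
  have bnd: "\<forall>xs. P xs \<longrightarrow> length xs < card C + 1"
  proof (intro allI impI)
    fix xs assume "P xs"
    then have "set xs \<subseteq> C" "distinct xs" unfolding P_def by auto
    then have "card (set xs) \<le> card C" "card (set xs) = length xs"
      using card_mono[OF finC] distinct_card by blast+
    then show "length xs < card C + 1" by simp
  qed
  obtain xs where xs: "P xs" and mx: "\<forall>ys. P ys \<longrightarrow> length ys \<le> length xs"
    using ex_has_greatest_nat[of P "[w]" length, OF P0 bnd] by blast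
  have xs1: "xs \<noteq> []" "hd xs = w" "distinct xs" "set xs \<subseteq> C" "chainE xs" using xs unfolding P_def by auto
  define x where "x = last xs"
  have xC: "x \<in> C" using xs1(1,4) last_in_set unfolding x_def by blast
  have "x \<in> S" using xC Csub by blast
  moreover have "x \<notin> D" using H xC unfolding C_def by blast
  ultimately have "x \<in> S - D" by simp
  then obtain y1 y2 where y12: "y1 \<noteq> y2" "R S x y1" "R S x y2" using unc by blast
  define pr where "pr = (if length xs = 1 then v else xs ! (length xs - 2))"
  have "\<exists>y. y \<in> S \<and> E x y \<and> y \<noteq> pr"
  proof (cases "y1 = pr")
    case True then show ?thesis using y12 unfolding R_def by auto
  next
    case False then show ?thesis using y12 unfolding R_def by auto
  qed
  then obtain y where y: "y \<in> S" "E x y" "y \<noteq> pr" by blast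
  show False
  proof (cases "y = v")
    case True
    have "x = w"
    proof (rule ccontr)
      assume "x \<noteq> w"
      have wA: "w \<in> S - {v}" using assms(2,3) by simp
      have rr: "(R (S - {v}))\<^sup>*\<^sup>* w x" using xC unfolding C_def comp_def by simp
      have "E v x" using y(2) True symE by simp
      show False using no_two_nbrs[OF _ assms(4) \<open>E v x\<close> \<open>x \<noteq> w\<close>[symmetric] rr wA] by simp
    qed
    have hl: "hd xs = last xs" using \<open>x = w\<close> xs1(2) unfolding x_def by simp
    have "length xs = 1"
    proof (rule ccontr)
      assume "length xs \<noteq> 1"
      then have l2: "length xs - 1 \<noteq> 0" "length xs - 1 < length xs" using xs1(1) by (cases xs; simp)+
      have "xs ! 0 = xs ! (length xs - 1)" using hl xs1(1) by (simp add: hd_conv_nth last_conv_nth)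
      then have "0 = length xs - 1" using nth_eq_iff_index_eq[OF xs1(3)] l2 by (metis length_pos_if_in_set nth_mem)
      then show False using l2 by simp
    qed
    then show False using y(3) True unfolding pr_def by simp
  next
    case False
    have "y \<in> S - {v}" "x \<in> S - {v}" using y False xC Csub by auto
    then have yC: "y \<in> C" using comp_close[of x "S - {v}" w y] xC y(2) unfolding C_def by blast
    show False
    proof (cases "y \<in> set xs")
      case False
      have "P (xs @ [y])" unfolding P_def using xs1 False yC chainE_snoc[of xs y] y(2)
        unfolding x_def by auto
      then have "length (xs @ [y]) \<le> length xs" using mx by blast
      then show False by simp
    next
      case True
      obtain i where i: "i < length xs" "xs ! i = y" using True by (metis in_set_conv_nth)
      have xl: "x = xs ! (length xs - 1)" using xs1(1) unfolding x_def by (simp add: last_conv_nth)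
      have "y \<noteq> x" using y(2) irrE by blast
      then have i1: "i \<noteq> length xs - 1" using i xl by auto
      then have len2: "length xs \<ge> 2" using i by linarith
      then have "pr = xs ! (length xs - 2)" unfolding pr_def by simp
      then have "i \<noteq> length xs - 2" using y(3) i by auto
      then have i3: "i + 3 \<le> length xs" using i i1 by linarith
      have "is_cycle E (drop i xs)" unfolding is_cycle_def
      proof (intro conjI allI impI)
        show "3 \<le> length (drop i xs)" using i3 by simp
        show "distinct (drop i xs)" using xs1(3) by simp
        have "last (drop i xs) = x" using i unfolding x_def by (simp add: last_drop)
        moreover have "hd (drop i xs) = y" using i by (simp add: hd_drop_conv_nth)
        ultimately show "E (last (drop i xs)) (hd (drop i xs))" using y(2) by simp
      next
        fix j assume "Suc j < length (drop i xs)"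
        then show "E (drop i xs ! j) (drop i xs ! Suc j)"
          using xs1(5) unfolding chainE_def by simp
      qed
      then show False using acyc by blast
    qed
  qed
qed


lemma centroid:
  assumes "S \<subseteq> V" "S \<noteq> {}" "conn S"
  shows "\<exists>v\<in>S. \<forall>x\<in>S-{v}. 2 * card (comp (S-{v}) x) \<le> card S"
proof (rule ccontr)
  assume "\<not> ?thesis"
  then have H: "\<forall>v\<in>S. \<exists>x\<in>S-{v}. card S < 2 * card (comp (S-{v}) x)" by (simp add: not_le)
  define Q where "Q vx \<longleftrightarrow> fst vx \<in> S \<and> snd vx \<in> S - {fst vx} \<and> card S < 2 * card (comp (S - {fst vx}) (snd vx))" for vx
  define m where "m vx = card (comp (S - {fst vx}) (snd vx))" for vx
  obtain v0 where "v0 \<in> S" using assms(2) by blast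
  then obtain x0 where "x0 \<in> S - {v0}" "card S < 2 * card (comp (S-{v0}) x0)" using H by blast
  then have "Q (v0, x0)" unfolding Q_def using \<open>v0 \<in> S\<close> by simp
  then obtain vx where vx: "Q vx" and mn: "\<forall>y. Q y \<longrightarrow> m vx \<le> m y"
    using ex_has_least_nat[of Q "(v0, x0)" m] by blast
  define v where "v = fst vx"
  define x where "x = snd vx"
  define C where "C = comp (S - {v}) x"
  have v: "v \<in> S" "x \<in> S - {v}" "card S < 2 * card C" using vx unfolding Q_def v_def x_def C_def by auto
  have Csub: "C \<subseteq> S - {v}" unfolding C_def using comp_in[of x "S - {v}"] v(2) by simp
  have finS: "finite S" using assms(1) finV finite_subset by auto
  have finC: "finite C" using Csub finS finite_subset by auto
  obtain w where w: "w \<in> C" "E v w" using nbr[OF assms(3) v(1,2)] unfolding C_def by blast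
  have wS: "w \<in> S - {v}" using w Csub by blast
  have compw: "comp (S - {v}) w = C" using comp_eq w(1) unfolding C_def by simp
  obtain x' where x': "x' \<in> S - {w}" "card S < 2 * card (comp (S-{w}) x')" using H wS by blast
  define D where "D = comp (S-{w}) x'"
  have Dsub: "D \<subseteq> S - {w}" unfolding D_def using comp_in[of x' "S - {w}"] x'(1) by simp
  have finD: "finite D" using Dsub finS finite_subset by auto
  show False
  proof (cases "v \<in> D")
    case True
    have compv: "comp (S - {w}) v = D" using comp_eq True unfolding D_def by simp
    have disj: "D \<inter> C = {}"
    proof (rule ccontr)
      assume "D \<inter> C \<noteq> {}"
      then obtain d where d: "d \<in> D" "d \<in> C" by blast
      have "(R (S - {w}))\<^sup>*\<^sup>* v d" using d(1) compv unfolding comp_def by blast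
      moreover have "v \<notin> C" using Csub by blast
      ultimately obtain y z where yz: "R (S - {w}) y z" "y \<notin> C" "z \<in> C"
        using crossing[of "R (S - {w})" v d "\<lambda>t. t \<in> C"] d(2) by blast
      have zA: "z \<in> S - {v}" using yz(3) Csub by blast
      show False
      proof (cases "y = v")
        case True
        have "z \<noteq> w" using yz(1) unfolding R_def by simp
        have "E v z" using yz(1) True unfolding R_def by simp
        have "(R (S - {v}))\<^sup>*\<^sup>* w z" using yz(3) compw unfolding comp_def by blast
        show False using no_two_nbrs[OF _ w(2) \<open>E v z\<close> \<open>z \<noteq> w\<close>[symmetric] \<open>(R (S - {v}))\<^sup>*\<^sup>* w z\<close> wS] by simp
      next
        case False
        have yA: "y \<in> S - {v}" using yz(1) False unfolding R_def by simp
        have "E z y" using yz(1) symE unfolding R_def by simp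
        then have "y \<in> C" using comp_close[of z "S - {v}" x y] yz(3) zA yA unfolding C_def by blast
        then show False using yz(2) by simp
      qed
    qed
    have "D \<union> C \<subseteq> S" using Dsub Csub by blast
    then have "card (D \<union> C) \<le> card S" using card_mono finS by blast
    moreover have "card (D \<union> C) = card D + card C" using card_Un_disjoint[OF finD finC disj] .
    ultimately show False using v(3) x'(2) unfolding D_def by linarith
  next
    case False
    have "(R S)\<^sup>*\<^sup>* x' w" using assms(3) x'(1) wS unfolding conn_def by blast
    moreover have "x' \<in> D" unfolding D_def by (rule comp_self)
    moreover have "w \<notin> D" using Dsub by blast
    ultimately obtain y z where yz: "R S y z" "y \<in> D" "z \<notin> D"
      using crossing[of "R S" x' w "\<lambda>t. t \<notin> D"] by blast
    have yA: "y \<in> S - {w}" using yz(2) Dsub by blast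
    have "z = w"
    proof (rule ccontr)
      assume "z \<noteq> w"
      then have "z \<in> S - {w}" using yz(1) unfolding R_def by simp
      then have "z \<in> D" using comp_close[of y "S - {w}" x' z] yz(1,2) yA unfolding D_def R_def by blast
      then show False using yz(3) by simp
    qed
    have sub: "D \<subseteq> C - {w}"
    proof
      fix d assume d: "d \<in> D"
      have compd: "comp (S - {w}) d = D" using comp_eq d unfolding D_def by simp
      have "(R (S - {w}))\<^sup>*\<^sup>* d y" using yz(2) compd unfolding comp_def by blast
      moreover have "\<forall>t. (R (S - {w}))\<^sup>*\<^sup>* d t \<longrightarrow> t \<in> D" using compd unfolding comp_def by blast
      ultimately have "(R ((S - {w}) \<inter> D))\<^sup>*\<^sup>* d y" by (rule R_restrict)
      moreover have "(S - {w}) \<inter> D \<subseteq> S - {v}" using False Dsub by blast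
      ultimately have r1: "(R (S - {v}))\<^sup>*\<^sup>* d y" using R_mono by blast
      have "y \<noteq> v" using yz(2) False by blast
      then have "R (S - {v}) y w" using yz(1) \<open>z = w\<close> wS unfolding R_def by simp
      then have "(R (S - {v}))\<^sup>*\<^sup>* d w" using r1 by (simp add: rtranclp.rtrancl_into_rtrancl)
      then have "w \<in> comp (S - {v}) d" unfolding comp_def by simp
      then have "comp (S - {v}) w = comp (S - {v}) d" by (rule comp_eq)
      moreover have "d \<in> comp (S - {v}) d" by (rule comp_self)
      ultimately have "d \<in> C" using compw by simp
      moreover have "d \<noteq> w" using d Dsub by blast
      ultimately show "d \<in> C - {w}" by simp
    qed
    then have "card D \<le> card (C - {w})" using finC by (intro card_mono) auto
    moreover have "card (C - {w}) < card C" by (rule card_Diff1_less[OF finC w(1)])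
    ultimately have "card D < card C" by linarith
    moreover have "Q (w, x')" unfolding Q_def using wS x' by simp
    ultimately have "m vx \<le> m (w, x')" using mn by blast
    then have "card C \<le> card D" unfolding m_def v_def x_def C_def D_def by simp
    then show False using \<open>card D < card C\<close> by simp
  qed
qed

lemma free_color:
  fixes p :: "'a \<Rightarrow> color option"
  assumes "finite S" "card {y\<in>S. E x y} \<le> 2"
  shows "\<exists>c. \<forall>y\<in>S. E x y \<longrightarrow> p y \<noteq> Some c"
proof (rule ccontr)
  assume "\<not> ?thesis"
  then have "\<forall>c. \<exists>y\<in>S. E x y \<and> p y = Some c" by blast
  then obtain a b d where a: "a \<in> S" "E x a" "p a = Some Red" and b: "b \<in> S" "E x b" "p b = Some Blue"
     and d: "d \<in> S" "E x d" "p d = Some Green" by metis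
  have "{a, b, d} \<subseteq> {y\<in>S. E x y}" using a b d by blast
  then have "card {a, b, d} \<le> 2" using assms card_mono[of "{y\<in>S. E x y}" "{a,b,d}"] by simp
  moreover have "a \<noteq> b" "a \<noteq> d" "b \<noteq> d" using a b d by auto
  then have "card {a, b, d} = 3" by simp
  ultimately show False by simp
qed

lemma greedy:
  assumes "finite S" "\<forall>x\<in>S. card {y\<in>S. E x y} \<le> 2"
  shows "card (S - dom p) = n \<Longrightarrow> dom p \<subseteq> S \<Longrightarrow> proper_partial E p \<Longrightarrow> ext S p"
proof (induction n arbitrary: p)
  case 0
  then have "S - dom p = {}" using assms(1) by simp
  define g where "g x = (case p x of Some c \<Rightarrow> c | None \<Rightarrow> Red)" for x
  have gp: "\<forall>x\<in>dom p. p x = Some (g x)" unfolding g_def by auto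
  have "\<forall>u\<in>S. \<forall>w\<in>S. E u w \<longrightarrow> g u \<noteq> g w"
  proof (intro ballI impI)
    fix u w assume "u \<in> S" "w \<in> S" "E u w"
    then have "u \<in> dom p" "w \<in> dom p" using \<open>S - dom p = {}\<close> by auto
    then have "p u \<noteq> p w" using 0(3) \<open>E u w\<close> unfolding proper_partial_def by blast
    then show "g u \<noteq> g w" using gp \<open>u \<in> dom p\<close> \<open>w \<in> dom p\<close> by metis
  qed
  then show ?case unfolding ext_def using gp by blast
next
  case (Suc n)
  then obtain x where x: "x \<in> S" "x \<notin> dom p" by (metis Diff_iff card_0_eq assms(1) finite_Diff nat.distinct(1) ex_in_conv)
  obtain c where c: "\<forall>y\<in>S. E x y \<longrightarrow> p y \<noteq> Some c" using free_color assms x(1) by blast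
  define p' where "p' = p(x \<mapsto> c)"
  have "S - dom p' = (S - dom p) - {x}" unfolding p'_def by auto
  then have "card (S - dom p') = n" using Suc.prems(1) x by simp
  moreover have "dom p' \<subseteq> S" using Suc.prems(2) x(1) unfolding p'_def by auto
  moreover have "proper_partial E p'" unfolding proper_partial_def
  proof (intro allI impI)
    fix u w assume uw: "E u w" "p' u \<noteq> None" "p' w \<noteq> None"
    show "p' u \<noteq> p' w"
    proof (cases "u = x")
      case True
      then have "w \<noteq> x" using uw(1) irrE by blast
      then have "w \<in> dom p" using uw(3) unfolding p'_def by auto
      then have "w \<in> S" using Suc.prems(2) by blast
      then show ?thesis using c True uw(1) \<open>w \<noteq> x\<close> unfolding p'_def by auto
    next
      case False
      show ?thesis
      proof (cases "w = x")
        case True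
        then have "u \<in> dom p" using uw(2) False unfolding p'_def by auto
        then have "u \<in> S" using Suc.prems(2) by blast
        moreover have "E x u" using uw(1) True symE by simp
        ultimately show ?thesis using c True False unfolding p'_def by (metis fun_upd_other fun_upd_same)
      next
        case False
        then show ?thesis using \<open>u \<noteq> x\<close> uw Suc.prems(3) unfolding p'_def proper_partial_def by auto
      qed
    qed
  qed
  ultimately have "ext S p'" using Suc.IH by blast
  then obtain g where g: "\<forall>u\<in>S. \<forall>w\<in>S. E u w \<longrightarrow> g u \<noteq> g w" "\<forall>y\<in>dom p'. p' y = Some (g y)"
    unfolding ext_def by blast
  have "\<forall>y\<in>dom p. p y = Some (g y)"
  proof
    fix y assume "y \<in> dom p"
    then have "y \<noteq> x" "y \<in> dom p'" using x(2) unfolding p'_def by auto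
    then have "p' y = Some (g y)" using g(2) by blast
    moreover have "p' y = p y" using \<open>y \<noteq> x\<close> unfolding p'_def by simp
    ultimately show "p y = Some (g y)" by simp
  qed
  then show ?case unfolding ext_def using g(1) by blast
qed

lemma small_ext:
  assumes "S \<subseteq> V" "card S \<le> 3" "dom p \<subseteq> S" "proper_partial E p"
  shows "ext S p"
proof -
  have finS: "finite S" using assms(1) finV finite_subset by auto
  have "\<forall>x\<in>S. card {y\<in>S. E x y} \<le> 2"
  proof
    fix x assume "x \<in> S"
    have "{y\<in>S. E x y} \<subseteq> S - {x}" using irrE by blast
    then have "card {y\<in>S. E x y} \<le> card (S - {x})" using card_mono finS by blast
    also have "\<dots> = card S - 1" using \<open>x \<in> S\<close> finS by simp
    finally show "card {y\<in>S. E x y} \<le> 2" using assms(2) by simp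
  qed
  then show ?thesis using greedy finS assms(3,4) by blast
qed

end

lemma improper_wins: "\<not> proper_partial E p \<Longrightarrow> spoiler_wins V E k r p"
  by (cases r) auto

lemma improper_mono: "p \<subseteq>\<^sub>m p' \<Longrightarrow> \<not> proper_partial E p \<Longrightarrow> \<not> proper_partial E p'"
  unfolding proper_partial_def map_le_def by (metis domIff)

lemma sw_mono: "p \<subseteq>\<^sub>m p' \<Longrightarrow> spoiler_wins V E k r p \<Longrightarrow> spoiler_wins V E k r p'"
proof (cases r)
  case 0
  then show "p \<subseteq>\<^sub>m p' \<Longrightarrow> spoiler_wins V E k r p \<Longrightarrow> spoiler_wins V E k r p'" using improper_mono by auto
next
  case (Suc r')
  assume le: "p \<subseteq>\<^sub>m p'" and w: "spoiler_wins V E k r p"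
  show ?thesis
  proof (cases "proper_partial E p")
    case False then show ?thesis using improper_mono[OF le] improper_wins by blast
  next
    case True
    then obtain q v where "q \<subseteq>\<^sub>m p" "v \<in> V" "v \<notin> dom q" "card (dom q) + 1 \<le> k"
      "\<forall>c. spoiler_wins V E k r' (q(v \<mapsto> c))" using w Suc by auto
    moreover have "q \<subseteq>\<^sub>m p'" using \<open>q \<subseteq>\<^sub>m p\<close> le map_le_trans by blast
    ultimately show ?thesis using Suc by auto
  qed
qed


context FG
begin

lemma ext_mono: "p \<subseteq>\<^sub>m p' \<Longrightarrow> ext S p' \<Longrightarrow> ext S p"
proof -
  assume le: "p \<subseteq>\<^sub>m p'" and e: "ext S p'"
  then obtain g where g: "\<forall>u\<in>S. \<forall>w\<in>S. E u w \<longrightarrow> g u \<noteq> g w" "\<forall>x\<in>dom p'. p' x = Some (g x)"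
    unfolding ext_def by blast
  have "\<forall>x\<in>dom p. p x = Some (g x)"
  proof
    fix x assume x: "x \<in> dom p"
    then have "p x = p' x" using le unfolding map_le_def by blast
    moreover then have "x \<in> dom p'" using x by (simp add: domIff)
    ultimately show "p x = Some (g x)" using g(2) by simp
  qed
  then show ?thesis unfolding ext_def using g(1) by blast
qed

lemma ext_restrict: "ext S (p |` S) \<Longrightarrow> ext S p"
proof -
  assume "ext S (p |` S)"
  then obtain g where g: "\<forall>u\<in>S. \<forall>w\<in>S. E u w \<longrightarrow> g u \<noteq> g w" "\<forall>x\<in>dom (p |` S). (p |` S) x = Some (g x)"
    unfolding ext_def by blast
  define g' where "g' y = (if y \<in> S then g y else the (p y))" for y
  have "\<forall>u\<in>S. \<forall>w\<in>S. E u w \<longrightarrow> g' u \<noteq> g' w" using g(1) unfolding g'_def by simp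
  moreover have "\<forall>x\<in>dom p. p x = Some (g' x)"
  proof
    fix x assume x: "x \<in> dom p"
    show "p x = Some (g' x)"
    proof (cases "x \<in> S")
      case True
      then have "x \<in> dom (p |` S)" using x by simp
      then show ?thesis using g(2) True unfolding g'_def by simp
    next
      case False then show ?thesis using x unfolding g'_def by auto
    qed
  qed
  ultimately show ?thesis unfolding ext_def by blast
qed

lemma main:
  "S \<subseteq> V \<Longrightarrow> S \<noteq> {} \<Longrightarrow> conn S \<Longrightarrow> dom p \<subseteq> S \<Longrightarrow>
   (\<forall>x\<in>S - dom p. \<exists>y z. y \<noteq> z \<and> R S x y \<and> R S x z) \<Longrightarrow>
   (\<forall>x\<in>dom p. \<forall>y z. R S x y \<longrightarrow> R S x z \<longrightarrow> y = z) \<Longrightarrow>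
   card (dom p) < k \<Longrightarrow> card S \<le> 2 ^ r + 2 \<Longrightarrow> \<not> ext S p \<Longrightarrow> spoiler_wins V E k r p"
proof (induction r arbitrary: S p)
  case 0
  then have "card S \<le> 3" by simp
  then have "\<not> proper_partial E p" using small_ext[of S p] 0(1,4,9) by blast
  then show ?case by (rule improper_wins)
next
  case (Suc r)
  note prems = Suc.prems
  have finS: "finite S" using prems(1) finV finite_subset by auto
  show ?case
  proof (cases "card S \<le> 3")
    case True
    then have "\<not> proper_partial E p" using small_ext[of S p] prems(1,4,9) by blast
    then show ?thesis by (rule improper_wins)
  next
    case False
    then have n4: "card S \<ge> 4" by simp
    obtain v where v: "v \<in> S" "\<forall>x\<in>S-{v}. 2 * card (comp (S-{v}) x) \<le> card S"
      using centroid[OF prems(1-3)] by blast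
    have "S \<noteq> {v}" using n4 by auto
    then obtain x1 where x1: "x1 \<in> S - {v}" using v(1) by blast
    have vnd: "v \<notin> dom p"
    proof
      assume vd: "v \<in> dom p"
      define C where "C = comp (S - {v}) x1"
      have Csub: "C \<subseteq> S - {v}" unfolding C_def using comp_in[of x1 "S - {v}"] x1 by simp
      obtain w where w: "w \<in> C" "E v w" using nbr[OF prems(3) v(1) x1] unfolding C_def by blast
      have wS: "w \<in> S" using w(1) Csub by blast
      have "S \<subseteq> insert v C"
      proof
        fix s assume "s \<in> S"
        then have rs: "(R S)\<^sup>*\<^sup>* v s" using prems(3) v(1) unfolding conn_def by blast
        show "s \<in> insert v C"
        proof (rule closure[OF rs])
          show "v \<in> insert v C" by simp
        next
          fix y z assume y: "y \<in> insert v C" and yz: "R S y z"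
          show "z \<in> insert v C"
          proof (cases "y = v")
            case True
            have "R S v w" using w(2) v(1) wS unfolding R_def by simp
            then have "z = w" using prems(6) vd yz True by blast
            then show ?thesis using w(1) by simp
          next
            case False
            then have yC: "y \<in> C" using y by simp
            show ?thesis
            proof (cases "z = v")
              case True then show ?thesis by simp
            next
              case False
              then have "z \<in> S - {v}" using yz unfolding R_def by simp
              moreover have "y \<in> S - {v}" using yC Csub by blast
              ultimately have "z \<in> C" using comp_close[of y "S - {v}" x1 z] yC yz unfolding C_def R_def by blast
              then show ?thesis by simp
            qed
          qed
        qed
      qed
      moreover have "finite (insert v C)" using Csub finS finite_subset by auto
      ultimately have "card S \<le> card (insert v C)" using card_mono by blast
      also have "\<dots> \<le> Suc (card C)" using card_insert_le_m1[of "Suc (card C)" C v] by simp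
      finally have "card S \<le> Suc (card C)" .
      moreover have "2 * card C \<le> card S" using v(2) x1 unfolding C_def by blast
      ultimately show False using n4 by linarith
    qed
    obtain a b where ab: "a \<noteq> b" "R S v a" "R S v b" using prems(5) v(1) vnd by blast
    have moves: "\<forall>c. spoiler_wins V E k r (p(v \<mapsto> c))"
    proof
      fix c
      define p1 where "p1 = p(v \<mapsto> c)"
      show "spoiler_wins V E k r (p(v \<mapsto> c))"
      proof (cases "proper_partial E p1")
        case False then show ?thesis using improper_wins unfolding p1_def by blast
      next
        case True
        have le1: "p \<subseteq>\<^sub>m p1" unfolding p1_def map_le_def using vnd by auto
        have ne1: "\<not> ext S p1" using ext_mono[OF le1] prems(9) by blast
        have p1v: "p1 v = Some c" unfolding p1_def by simp
        have dp1: "dom p1 = insert v (dom p)" unfolding p1_def by simp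
        define T where "T y = insert v (comp (S - {v}) y)" for y
        have "\<exists>x0\<in>S-{v}. \<not> ext (T x0) p1"
        proof (rule ccontr)
          assume "\<not> ?thesis"
          then have allx: "\<forall>y\<in>S-{v}. ext (T y) p1" by blast
          define good where "good A g \<longleftrightarrow> (\<forall>u\<in>A. \<forall>w\<in>A. E u w \<longrightarrow> g u \<noteq> g w) \<and> (\<forall>x\<in>dom p1. p1 x = Some (g x))" for A g
          define gg where "gg y = (SOME g. good (T y) g)" for y
          have gy: "good (T y) (gg y)" if "y \<in> S - {v}" for y
          proof -
            have "\<exists>g. good (T y) g" using allx that unfolding ext_def good_def by blast
            then show ?thesis unfolding gg_def by (rule someI_ex)
          qed
          have gv: "gg y v = c" if "y \<in> S - {v}" for y
          proof -
            have "p1 v = Some (gg y v)" using gy[OF that] dp1 unfolding good_def by blast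
            then show ?thesis using p1v by simp
          qed
          define G where "G y = (if y = v then c else gg y y)" for y
          have edge: "G u \<noteq> G w" if uw: "u \<in> S" "w \<in> S" "E u w" for u w
          proof (cases "u = v")
            case True
            then have "w \<noteq> v" using uw(3) irrE by blast
            then have wA: "w \<in> S - {v}" using uw(2) by simp
            have "v \<in> T w" "w \<in> T w" unfolding T_def using comp_self by auto
            then have "gg w v \<noteq> gg w w" using gy[OF wA] uw(3) True unfolding good_def by blast
            then show ?thesis using gv[OF wA] True \<open>w \<noteq> v\<close> unfolding G_def by simp
          next
            case False
            show ?thesis
            proof (cases "w = v")
              case True
              then have uA: "u \<in> S - {v}" using uw(1) False by simp
              have "v \<in> T u" "u \<in> T u" unfolding T_def using comp_self by auto
              moreover have "E v u" using uw(3) True symE by simp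
              ultimately have "gg u v \<noteq> gg u u" using gy[OF uA] unfolding good_def by blast
              then show ?thesis using gv[OF uA] True False unfolding G_def by simp
            next
              case wv: False
              have uA: "u \<in> S - {v}" using uw(1) False by simp
              have wA: "w \<in> S - {v}" using uw(2) wv by simp
              have "w \<in> comp (S - {v}) u" using comp_close[OF comp_self uA wA uw(3)] .
              then have "comp (S - {v}) w = comp (S - {v}) u" by (rule comp_eq)
              then have Tw: "T w = T u" unfolding T_def by simp
              have "u \<in> T u" "w \<in> T u" unfolding T_def using comp_self \<open>w \<in> comp (S - {v}) u\<close> by auto
              then have "gg u u \<noteq> gg u w" using gy[OF uA] uw(3) unfolding good_def by blast
              moreover have "gg w = gg u" unfolding gg_def using Tw by simp
              ultimately show ?thesis using False wv unfolding G_def by simp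
            qed
          qed
          have col: "p1 x = Some (G x)" if x: "x \<in> dom p1" for x
          proof (cases "x = v")
            case True then show ?thesis using p1v unfolding G_def by simp
          next
            case False
            then have "x \<in> dom p" using x dp1 by simp
            then have xA: "x \<in> S - {v}" using prems(4) False by blast
            then show ?thesis using gy[OF xA] x False unfolding good_def G_def by simp
          qed
          have "ext S p1" unfolding ext_def using edge col by blast
          then show False using ne1 by simp
        qed
        then obtain x0 where x0: "x0 \<in> S - {v}" "\<not> ext (T x0) p1" by blast
        define C where "C = comp (S - {v}) x0"
        define S' where "S' = insert v C"
        define p2 where "p2 = p1 |` S'"
        have Csub: "C \<subseteq> S - {v}" unfolding C_def using comp_in[of x0 "S - {v}"] x0(1) by simp
        have finC: "finite C" using Csub finS finite_subset by auto
        have S'sub: "S' \<subseteq> S" unfolding S'_def using Csub v(1) by blast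
        have vS': "v \<in> S'" unfolding S'_def by simp
        have compC: "comp (S - {v}) y = C" if "y \<in> C" for y using comp_eq that unfolding C_def by simp
        have nbC: "y \<in> S'" if "x \<in> C" "R S x y" for x y
        proof (cases "y = v")
          case True then show ?thesis using vS' by simp
        next
          case False
          then have "y \<in> S - {v}" using that(2) unfolding R_def by simp
          moreover have "x \<in> S - {v}" using that(1) Csub by blast
          ultimately have "y \<in> C" using comp_close[of x "S - {v}" x0 y] that unfolding C_def R_def by blast
          then show ?thesis unfolding S'_def by simp
        qed
        have twoC: "y = z" if "y \<in> C" "z \<in> C" "E v y" "E v z" for y z
        proof (rule ccontr)
          assume "y \<noteq> z"
          have r: "(R (S - {v}))\<^sup>*\<^sup>* y z" using that(2) compC[OF that(1)] unfolding comp_def by blast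
          have yA: "y \<in> S - {v}" using that(1) Csub by blast
          show False using no_two_nbrs[of v "S - {v}" y z, OF _ that(3) that(4) \<open>y \<noteq> z\<close> r yA] by simp
        qed
        obtain z0 where z0: "z0 \<in> C" "E v z0" using nbr[OF prems(3) v(1) x0(1)] unfolding C_def by blast
        have i1: "S' \<subseteq> V" using S'sub prems(1) by blast
        have i2: "S' \<noteq> {}" using vS' by blast
        have fromv: "(R S')\<^sup>*\<^sup>* v t" if "t \<in> S'" for t
        proof (cases "t = v")
          case True then show ?thesis by simp
        next
          case False
          then have tC: "t \<in> C" using that unfolding S'_def by simp
          have "(R (S - {v}))\<^sup>*\<^sup>* z0 t" using tC compC[OF z0(1)] unfolding comp_def by blast
          moreover have "\<forall>u. (R (S - {v}))\<^sup>*\<^sup>* z0 u \<longrightarrow> u \<in> C" using compC[OF z0(1)] unfolding comp_def by blast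
          ultimately have "(R ((S - {v}) \<inter> C))\<^sup>*\<^sup>* z0 t" by (rule R_restrict)
          moreover have "(S - {v}) \<inter> C \<subseteq> S'" unfolding S'_def by blast
          ultimately have r: "(R S')\<^sup>*\<^sup>* z0 t" using R_mono by blast
          have "R S' v z0" using z0 vS' unfolding R_def S'_def by simp
          then show ?thesis using r by (rule converse_rtranclp_into_rtranclp)
        qed
        have i3: "conn S'" unfolding conn_def
        proof (intro ballI)
          fix s t assume "s \<in> S'" "t \<in> S'"
          then show "(R S')\<^sup>*\<^sup>* s t" using fromv R_sym rtranclp_trans by metis
        qed
        have dp2: "dom p2 = insert v (dom p) \<inter> S'" unfolding p2_def using dp1 by simp
        have i4: "dom p2 \<subseteq> S'" using dp2 by blast
        have i5: "\<forall>x\<in>S' - dom p2. \<exists>y z. y \<noteq> z \<and> R S' x y \<and> R S' x z"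
        proof
          fix x assume x: "x \<in> S' - dom p2"
          then have "x \<noteq> v" using dp2 vS' by blast
          then have xC: "x \<in> C" using x unfolding S'_def by blast
          have "x \<notin> dom p" using x dp2 by blast
          then have "x \<in> S - dom p" using xC Csub by blast
          then obtain y z where yz: "y \<noteq> z" "R S x y" "R S x z" using prems(5) by blast
          have "y \<in> S'" "z \<in> S'" using nbC[OF xC] yz by auto
          then have "R S' x y" "R S' x z" using yz xC unfolding R_def S'_def by auto
          then show "\<exists>y z. y \<noteq> z \<and> R S' x y \<and> R S' x z" using yz(1) by blast
        qed
        have i6: "\<forall>x\<in>dom p2. \<forall>y z. R S' x y \<longrightarrow> R S' x z \<longrightarrow> y = z"
        proof (intro ballI allI impI)
          fix x y z assume x: "x \<in> dom p2" and xy: "R S' x y" and xz: "R S' x z"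
          show "y = z"
          proof (cases "x = v")
            case True
            have "y \<noteq> v" "z \<noteq> v" using xy xz True irrE unfolding R_def by auto
            then have "y \<in> C" "z \<in> C" using xy xz unfolding R_def S'_def by auto
            then show ?thesis using twoC xy xz True unfolding R_def by blast
          next
            case False
            then have "x \<in> dom p" using x dp2 by blast
            moreover have "R S x y" "R S x z" using xy xz S'sub unfolding R_def by auto
            ultimately show ?thesis using prems(6) by blast
          qed
        qed
        have i7: "card (dom p2) < k"
        proof -
          have "\<not> (a \<in> C \<and> b \<in> C)" using twoC ab unfolding R_def by blast
          then obtain w2 where w2: "w2 \<notin> C" "R S v w2" using ab by blast
          have w2S: "w2 \<in> S" "w2 \<noteq> v" using w2(2) irrE unfolding R_def by auto
          have "E v w2" using w2(2) unfolding R_def by simp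
          then have "comp (S - {v}) w2 \<inter> dom p \<noteq> {}"
            using colored_in_branch[OF v(1) w2S(1) w2S(2) _ prems(1) prems(5)] by blast
          then obtain u where u: "u \<in> comp (S - {v}) w2" "u \<in> dom p" by blast
          have "u \<notin> C"
          proof
            assume "u \<in> C"
            then have "comp (S - {v}) u = C" by (rule compC)
            moreover have "comp (S - {v}) u = comp (S - {v}) w2" using u(1) by (rule comp_eq)
            ultimately have "w2 \<in> C" using comp_self by metis
            then show False using w2(1) by simp
          qed
          have "dom p2 \<subseteq> insert v (dom p - {u})" using dp2 \<open>u \<notin> C\<close> unfolding S'_def by blast
          moreover have finp: "finite (dom p)" using prems(4) finS finite_subset by auto
          ultimately have "card (dom p2) \<le> card (insert v (dom p - {u}))" by (intro card_mono) auto
          also have "\<dots> \<le> Suc (card (dom p - {u}))" by (simp add: card_insert_if finp)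
          also have "\<dots> = card (dom p)" proof -
            have "card (dom p) > 0" using u(2) finp card_gt_0_iff by blast
            then show ?thesis using u(2) finp by simp
          qed
          finally show ?thesis using prems(7) by simp
        qed
        have i8: "card S' \<le> 2 ^ r + 2"
        proof -
          have "card S' \<le> Suc (card C)" unfolding S'_def by (simp add: card_insert_if finC)
          moreover have "2 * card C \<le> card S" using v(2) x0(1) unfolding C_def by blast
          ultimately show ?thesis using prems(8) by simp
        qed
        have i9: "\<not> ext S' p2" using ext_restrict x0(2) unfolding p2_def S'_def T_def C_def by blast
        have "spoiler_wins V E k r p2" using Suc.IH[OF i1 i2 i3 i4 i5 i6 i7 i8 i9] .
        moreover have "p2 \<subseteq>\<^sub>m p1" unfolding p2_def map_le_def by simp
        ultimately show ?thesis using sw_mono unfolding p1_def by blast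
      qed
    qed
    have "v \<in> V" using v(1) prems(1) by blast
    moreover have "card (dom p) + 1 \<le> k" using prems(7) by simp
    ultimately show ?thesis using moves vnd by (auto intro!: exI[of _ p])
  qed
qed

end


theorem lemma8:
  fixes V :: "'a set" and E :: "'a \<Rightarrow> 'a \<Rightarrow> bool" and p :: "'a \<Rightarrow> color option"
    and k r :: nat
  assumes "is_tree V E"
    and "card V \<le> 2 ^ r + 2"
    and "card (leaves V E) < k"
    and "dom p = leaves V E"
    and "\<not> extends_to_proper V E p"
  shows "spoiler_wins V E k r p"
proof -
  have sg: "simple_graph V E" and cg: "connected_graph V E" and nc: "\<nexists>cs. is_cycle E cs"
    using assms(1) unfolding is_tree_def by auto
  have finV: "finite V" and symE: "\<And>u w. E u w \<Longrightarrow> E w u" and irrE: "\<And>u. \<not> E u u"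
    and inV: "\<And>u w. E u w \<Longrightarrow> u \<in> V \<and> w \<in> V"
    using sg unfolding simple_graph_def by auto
  interpret FG V E
    by unfold_locales (use finV symE irrE nc in auto)
  have Vne: "V \<noteq> {}" and ccV: "\<forall>u\<in>V. \<forall>v\<in>V. E\<^sup>*\<^sup>* u v" using cg unfolding connected_graph_def by auto
  have RV: "R V = E" using inV unfolding R_def by (intro ext) auto
  have extEq: "ext V p = extends_to_proper V E p" unfolding ext_def extends_to_proper_def by simp
  show ?thesis
  proof (cases "card V \<le> 1")
    case True
    then obtain a where Va: "V = {a}" using Vne finV by (metis card_0_eq card_le_Suc0_iff_eq le_Suc_eq One_nat_def ex_in_conv is_singletonI' is_singleton_the_elem One_nat_def)
    have "{u\<in>V. E a u} = {}" using Va irrE by auto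
    then have "leaves V E = {}" unfolding leaves_def using Va by (auto simp del: Collect_empty_eq)
    then have "dom p = {}" using assms(4) by simp
    moreover have "\<forall>u\<in>V. \<forall>w\<in>V. E u w \<longrightarrow> (\<lambda>_. Red) u \<noteq> (\<lambda>_. Red) w" using Va irrE by auto
    ultimately have "extends_to_proper V E p" unfolding extends_to_proper_def by blast
    then show ?thesis using assms(5) by simp
  next
    case False
    have c1: "conn V" unfolding conn_def RV using ccV by blast
    have c2: "dom p \<subseteq> V" using assms(4) unfolding leaves_def by auto
    have c3: "\<forall>x\<in>V - dom p. \<exists>y z. y \<noteq> z \<and> R V x y \<and> R V x z"
    proof
      fix x assume x: "x \<in> V - dom p"
      define N where "N = {u\<in>V. E x u}"
      have finN: "finite N" unfolding N_def using finV by simp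
      have n1: "card N \<noteq> 1" using x assms(4) unfolding leaves_def N_def by auto
      obtain y where y: "y \<in> V" "y \<noteq> x"
      proof -
        have "\<not> V \<subseteq> {x}" using False finV by (metis card_le_Suc0_iff_eq One_nat_def empty_iff insert_iff subset_iff)
        then show ?thesis using that by blast
      qed
      have "E\<^sup>*\<^sup>* x y" using ccV x y(1) by blast
      then obtain z where "E x z" using y(2) by (metis converse_rtranclpE)
      then have "z \<in> N" unfolding N_def using inV by auto
      then have "card N \<noteq> 0" using finN by auto
      then have "\<not> card N \<le> Suc 0" using n1 by simp
      then obtain a1 a2 where "a1 \<in> N" "a2 \<in> N" "a1 \<noteq> a2" using card_le_Suc0_iff_eq[OF finN] by blast
      then show "\<exists>y z. y \<noteq> z \<and> R V x y \<and> R V x z" unfolding RV N_def by blast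
    qed
    have c4: "\<forall>x\<in>dom p. \<forall>y z. R V x y \<longrightarrow> R V x z \<longrightarrow> y = z"
    proof (intro ballI allI impI)
      fix x y z assume x: "x \<in> dom p" and xy: "R V x y" and xz: "R V x z"
      have "card {u\<in>V. E x u} = 1" using x assms(4) unfolding leaves_def by auto
      then obtain t where t: "{u\<in>V. E x u} = {t}" by (rule card_1_singletonE)
      have "y \<in> {u\<in>V. E x u}" "z \<in> {u\<in>V. E x u}" using xy xz unfolding RV using inV by auto
      then show "y = z" using t by auto
    qed
    show ?thesis
      using main[OF subset_refl Vne c1 c2 c3 c4] assms(2,3,4,5) extEq by simp
  qed
qed

end
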